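(* For $-2\pi<\theta<2\pi$ let $\widehat D_\theta=\inf_{(x,v)\in\Gamma_\theta}d_H((0,1),(x,v))$. Then: (1) if $0\le|\theta|<\pi$, then $\widehat D_\theta=|\theta|=d_H\big((0,1),(\frac{\theta+\sin\theta}{2},\cos^2\frac{\theta}{2})\big)$; (2) if $\pi\le|\theta|<2\pi$, then $\widehat D_\theta=\theta\big(\sin\frac{\theta}{2}\big)^{-1}=d_H\big((0,1),(\frac{\theta-\sin\theta}{1-\cos\theta},0)\big)$.
   Context: Let $\mathcal{H}=\{(x,v)\in\mathbb{R}^2:v\ge0\}$ and let $d_H$ be the Riemannian distance on $\mathcal{H}$ induced by the metric $ds^2=v^{-1}(dx^2+dv^2)$ on the open upper half-plane (extended to the boundary). For $v\ge0$ and $0<|\delta|<2\pi$ set $$f(v,\delta)=\frac{(v+1)(\delta-\sin\delta)+2\sqrt v\,(2\sin\frac{\delta}{2}-\delta\cos\frac{\delta}{2})}{2\sin^2\frac{\delta}{2}},$$ and $f(v,0)=0$. For $(x,v)\in\mathcal{H}$, $\delta(x,v)$ denotes the unique $\delta\in(-2\pi,2\pi)$ with $f(v,\delta)=x$, and $\Gamma_\theta=\{(x,v)\in\mathcal{H}:\delta(x,v)=\theta\}$. *)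

theory Defs
  imports "HOL-Analysis.Analysis"
begin

definition fH :: "real \<Rightarrow> real \<Rightarrow> real" where
  "fH v \<delta> = (if \<delta> = 0 then 0 else
     ((v + 1) * (\<delta> - sin \<delta>) + 2 * sqrt v * (2 * sin (\<delta>/2) - \<delta> * cos (\<delta>/2)))
       / (2 * (sin (\<delta>/2))^2))"

definition deltaH :: "real \<Rightarrow> real \<Rightarrow> real" where
  "deltaH x v = (THE \<delta>. -2*pi < \<delta> \<and> \<delta> < 2*pi \<and> fH v \<delta> = x)"

definition GammaH :: "real \<Rightarrow> (real \<times> real) set" where
  "GammaH \<theta> = {(x, v). v \<ge> 0 \<and> deltaH x v = \<theta>}"

text \<open>Length of admissible curves for the metric v^{-1}(dx^2+dv^2): piecewise C1 curves on [0,1]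
  whose interior lies in the open upper half-plane (endpoints may lie on the boundary v = 0).\<close>
definition hyp_dist :: "real \<times> real \<Rightarrow> real \<times> real \<Rightarrow> real" where
  "hyp_dist p q = Inf {L. \<exists>\<gamma>::real \<Rightarrow> real \<times> real.
      \<gamma> piecewise_C1_differentiable_on {0..1} \<and> \<gamma> 0 = p \<and> \<gamma> 1 = q \<and>
      (\<forall>t\<in>{0<..<1}. snd (\<gamma> t) > 0) \<and>
      ((\<lambda>t. norm (vector_derivative \<gamma> (at t)) / sqrt (snd (\<gamma> t))) has_integral L) {0..1}}"

definition Dhat :: "real \<Rightarrow> real" where
  "Dhat \<theta> = Inf ((\<lambda>p. hyp_dist (0, 1) p) ` GammaH \<theta>)"

end

theory Submission
  imports Defs "HOL-Real_Asymp.Real_Asymp"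
begin

definition PP :: "real \<Rightarrow> real" where
  "PP d = (if d = 0 then 0 else (d - 2 * sin (d/2) * cos (d/2)) / (2 * (sin (d/2))^2))"
definition QQ :: "real \<Rightarrow> real" where
  "QQ d = (if d = 0 then 0 else (2 * sin (d/2) - d * cos (d/2)) / (2 * (sin (d/2))^2))"
definition hh :: "real \<Rightarrow> real" where
  "hh d = (if d = 0 then 2 else d / sin (d/2))"
definition PP' :: "real \<Rightarrow> real" where
  "PP' d = (if d = 0 then 1/3 else (2 * sin (d/2) - d * cos (d/2)) / (2 * (sin (d/2))^3))"
definition QQ' :: "real \<Rightarrow> real" where
  "QQ' d = (if d = 0 then 1/6 else (d * (1 + (cos (d/2))^2) - 4 * sin (d/2) * cos (d/2)) / (4 * (sin (d/2))^3))"

lemma sin_double_half: "sin (d::real) = 2 * sin (d/2) * cos (d/2)"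
  using sin_double[of "d/2"] by simp

lemma cos_double_half: "cos (d::real) = 1 - 2 * (sin (d/2))^2"
  using cos_double_sin[of "d/2"] by simp

lemma sin_half_nz: assumes "-2*pi < d" "d < 2*pi" "d \<noteq> 0" shows "sin (d/2) \<noteq> 0"
proof
  assume "sin (d/2) = 0"
  then have "d/2 = 0" using sin_eq_0_pi[of "d/2"] assms by auto
  with assms show False by simp
qed

lemma fH_eq: "fH v d = (v+1) * PP d + 2 * sqrt v * QQ d"
  unfolding fH_def PP_def QQ_def sin_double_half[of d]
  by (cases "sin (d/2) = 0") (simp_all add: field_simps)

lemma PP_deriv: assumes "-2*pi < d" "d < 2*pi" shows "(PP has_real_derivative PP' d) (at d)"
proof (cases "d = 0")
  case True
  have "((\<lambda>y::real. ((y - 2 * sin (y/2) * cos (y/2))/(2*(sin(y/2))^2)) / y) \<longlongrightarrow> 1/3) (at 0)"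
    by (real_asymp simp: field_simps)
  then have "((\<lambda>y. (PP y - PP 0) / (y - 0)) \<longlongrightarrow> 1/3) (at 0)"
    by (rule Lim_transform_eventually) (auto simp: PP_def eventually_at_filter)
  then show ?thesis using True by (simp add: has_field_derivative_iff PP'_def)
next
  case False
  have s: "sin (d/2) \<noteq> 0" using sin_half_nz assms False by blast
  have "((\<lambda>d. (d - 2 * sin (d/2) * cos (d/2)) / (2 * (sin (d/2))^2)) has_real_derivative PP' d) (at d)"
    apply (rule derivative_eq_intros refl | simp add: s)+
    using s False unfolding PP'_def
    apply (simp add: field_simps power2_eq_square power3_eq_cube)
    using sin_cos_squared_add[of "d/2"] by algebra
  then show ?thesis
    by (rule has_field_derivative_transform_within_open[where S="-{0}"]) (auto simp: False PP_def)
qed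

lemma QQ_deriv: assumes "-2*pi < d" "d < 2*pi" shows "(QQ has_real_derivative QQ' d) (at d)"
proof (cases "d = 0")
  case True
  have "((\<lambda>y::real. ((2 * sin (y/2) - y * cos (y/2))/(2*(sin(y/2))^2)) / y) \<longlongrightarrow> 1/6) (at 0)"
    by (real_asymp simp: field_simps)
  then have "((\<lambda>y. (QQ y - QQ 0) / (y - 0)) \<longlongrightarrow> 1/6) (at 0)"
    by (rule Lim_transform_eventually) (auto simp: QQ_def eventually_at_filter)
  then show ?thesis using True by (simp add: has_field_derivative_iff QQ'_def)
next
  case False
  have s: "sin (d/2) \<noteq> 0" using sin_half_nz assms False by blast
  have "((\<lambda>d. (2 * sin (d/2) - d * cos (d/2)) / (2 * (sin (d/2))^2)) has_real_derivative QQ' d) (at d)"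
    apply (rule derivative_eq_intros refl | simp add: s)+
    using s False unfolding QQ'_def
    apply (simp add: field_simps power2_eq_square power3_eq_cube)
    using sin_cos_squared_add[of "d/2"] by algebra
  then show ?thesis
    by (rule has_field_derivative_transform_within_open[where S="-{0}"]) (auto simp: False QQ_def)
qed

lemma hh_deriv: assumes "-2*pi < d" "d < 2*pi" shows "(hh has_real_derivative QQ d) (at d)"
proof (cases "d = 0")
  case True
  have "((\<lambda>y::real. (y/sin(y/2) - 2) / y) \<longlongrightarrow> 0) (at 0)"
    by (real_asymp simp: field_simps)
  then have "((\<lambda>y. (hh y - hh 0) / (y - 0)) \<longlongrightarrow> 0) (at 0)"
    by (rule Lim_transform_eventually) (auto simp: hh_def eventually_at_filter)
  then show ?thesis using True by (simp add: has_field_derivative_iff QQ_def)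
next
  case False
  have s: "sin (d/2) \<noteq> 0" using sin_half_nz assms False by blast
  have "((\<lambda>d. d / sin (d/2)) has_real_derivative QQ d) (at d)"
    apply (rule derivative_eq_intros refl | simp add: s)+
    using s False unfolding QQ_def
    apply (simp add: field_simps power2_eq_square power3_eq_cube)
    done
  then show ?thesis
    by (rule has_field_derivative_transform_within_open[where S="-{0}"]) (auto simp: False hh_def)
qed

lemma sin_minus_xcos_pos: assumes "0 < y" "y < pi" shows "sin y - y * cos y > 0"
proof -
  have "(\<lambda>t. sin t - t * cos t) 0 < (\<lambda>t. sin t - t * cos t) y"
  proof (rule DERIV_pos_imp_increasing_open[OF assms(1)])
    fix x assume x: "0 < x" "x < y"
    have "((\<lambda>t. sin t - t * cos t) has_real_derivative x * sin x) (at x)"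
      by (rule derivative_eq_intros refl | simp)+
    moreover have "x * sin x > 0" using x assms by (simp add: sin_gt_zero)
    ultimately show "\<exists>z. ((\<lambda>t. sin t - t * cos t) has_real_derivative z) (at x) \<and> 0 < z" by blast
  next
    show "continuous_on {0..y} (\<lambda>t. sin t - t * cos t)" by (intro continuous_intros)
  qed
  then show ?thesis by simp
qed

lemma half_facts:
  assumes "-2*pi < d" "d < 2*pi" "d \<noteq> 0"
  shows "(2 * sin (d/2) - d * cos (d/2)) / (sin (d/2))^3 > 0" "d / sin (d/2) > 0"
proof -
  have "(2 * sin (d/2) - d * cos (d/2)) / (sin (d/2))^3 > 0 \<and> d / sin (d/2) > 0"
  proof (cases "d > 0")
    case True
    then have s: "sin (d/2) > 0" using assms by (intro sin_gt_zero) auto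
    have "sin (d/2) - (d/2) * cos (d/2) > 0" using True assms by (intro sin_minus_xcos_pos) auto
    then have "2 * sin (d/2) - d * cos (d/2) > 0" by linarith
    then show ?thesis using s True by simp
  next
    case False
    then have d: "d < 0" using assms by simp
    then have s: "sin (-d/2) > 0" using assms by (intro sin_gt_zero) auto
    have "sin (-d/2) - (-d/2) * cos (-d/2) > 0" using d assms by (intro sin_minus_xcos_pos) auto
    then have "2 * sin (d/2) - d * cos (d/2) < 0" by simp
    moreover have "sin (d/2) < 0" using s by simp
    moreover have "(sin (d/2))^3 < 0"
    proof -
      have "(- sin (d/2))^3 > 0" using \<open>sin (d/2) < 0\<close> by simp
      then show ?thesis by simp
    qed
    ultimately show ?thesis using d by (simp add: divide_neg_neg)
  qed
  then show "(2 * sin (d/2) - d * cos (d/2)) / (sin (d/2))^3 > 0" "d / sin (d/2) > 0" by auto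
qed

definition fd :: "real \<Rightarrow> real \<Rightarrow> real" where
  "fd v d = (v+1) * PP' d + 2 * sqrt v * QQ' d"

lemma fd_pos_aux:
  fixes s c d w :: real
  assumes s: "s \<noteq> 0" and sc: "s^2 + c^2 = 1" and k: "(2* s - d*c)/s^3 > 0" and ds: "d/s > 0" and w: "w \<ge> 0"
  shows "(w^2+1) * ((2* s - d*c)/(2* s^3)) + 2*w*((d*(1+c^2) - 4* s*c)/(4* s^3)) > 0"
proof -
  define k where "k = (2* s - d*c)/s^3"
  define m where "m = (1-c) * (d*(1-c)/s^3 + 4/s^2)"
  have c1: "c < 1"
  proof -
    have "s^2 > 0" using s by simp
    then have "c^2 < 1" using sc by linarith
    then show ?thesis by (smt (verit) one_le_power power2_eq_square)
  qed
  have "d/s^3 = (d/s)/s^2" by (simp add: power2_eq_square power3_eq_cube)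
  moreover have "(d/s)/s^2 > 0" using ds s by (metis divide_pos_pos zero_less_power2)
  ultimately have "d/s^3 > 0" by metis
  then have "d*(1-c)/s^3 \<ge> 0"
  proof -
    assume a: "d/s^3 > 0"
    have "d*(1-c)/s^3 = (d/s^3)*(1-c)" by simp
    also have "\<dots> \<ge> 0" by (rule mult_nonneg_nonneg) (use a c1 in auto)
    finally show ?thesis .
  qed
  moreover have "4/s^2 > 0" using s by simp
  ultimately have m: "m > 0" unfolding m_def using c1 by (intro mult_pos_pos add_nonneg_pos) auto
  have eq: "(w^2+1) * ((2* s - d*c)/(2* s^3)) + 2*w*((d*(1+c^2) - 4* s*c)/(4* s^3)) = k*(w-1)^2/2 + m*w/2"
    unfolding k_def m_def using s by (simp add: field_simps power2_eq_square power3_eq_cube)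
  have "k*(w-1)^2/2 + m*w/2 > 0"
  proof (cases "w = 0")
    case True then show ?thesis using k unfolding k_def[symmetric] by simp
  next
    case False
    then have "m*w/2 > 0" using m w by simp
    moreover have "k*(w-1)^2/2 \<ge> 0" using k unfolding k_def[symmetric] by simp
    ultimately show ?thesis by linarith
  qed
  then show ?thesis using eq by simp
qed

lemma fd_pos: assumes "v \<ge> 0" "-2*pi < d" "d < 2*pi" shows "fd v d > 0"
proof (cases "d = 0")
  case True
  then show ?thesis using assms by (simp add: fd_def PP'_def QQ'_def add_pos_nonneg)
next
  case False
  have s: "sin (d/2) \<noteq> 0" using sin_half_nz assms False by blast
  have "(sqrt v^2+1) * ((2 * sin (d/2) - d * cos (d/2))/(2 * sin (d/2)^3)) + 2 * sqrt v * ((d * (1+cos (d/2)^2) - 4 * sin (d/2) * cos (d/2))/(4 * sin (d/2)^3)) > 0"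
    by (rule fd_pos_aux[OF s sin_cos_squared_add half_facts(1)[OF assms(2,3) False] half_facts(2)[OF assms(2,3) False]]) (use assms in auto)
  then show ?thesis using assms False by (simp add: fd_def PP'_def QQ'_def)
qed

lemma fH_deriv_d: assumes "v \<ge> 0" "-2*pi < d" "d < 2*pi"
  shows "((\<lambda>d. fH v d) has_real_derivative fd v d) (at d)"
  unfolding fH_eq fd_def
  by (rule derivative_eq_intros PP_deriv QQ_deriv assms refl | simp)+

lemma fH_odd: "fH v (-d) = - fH v d"
proof (cases "d = 0")
  case False
  define N where "N = (v + 1) * (d - sin d) + 2 * sqrt v * (2 * sin (d / 2) - d * cos (d / 2))"
  define D where "D = 2 * (sin (d/2))^2"
  have 1: "fH v d = N / D" unfolding fH_def N_def D_def using False by simp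
  have 2: "fH v (-d) = (-N) / D" unfolding fH_def N_def D_def using False
    by (simp add: algebra_simps)
  show ?thesis unfolding 1 2 by (rule minus_divide_left[symmetric])
qed (simp add: fH_def)

lemma fH_cont: assumes "v \<ge> 0" "-2*pi < a" "b < 2*pi" shows "continuous_on {a..b} (fH v)"
proof -
  have "\<forall>x\<in>{a..b}. isCont (fH v) x"
  proof
    fix x assume "x \<in> {a..b}"
    then show "isCont (fH v) x" using assms by (intro DERIV_isCont[OF fH_deriv_d[of v x]]) auto
  qed
  then show ?thesis by (simp add: continuous_at_imp_continuous_on)
qed

lemma fH_mono: assumes "v \<ge> 0" "-2*pi < a" "a < b" "b < 2*pi" shows "fH v a < fH v b"
proof (rule DERIV_pos_imp_increasing[OF assms(3)])
  fix x assume "a \<le> x" "x \<le> b"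
  then show "\<exists>y. (fH v has_real_derivative y) (at x) \<and> 0 < y"
    using assms by (intro exI[of _ "fd v x"] conjI fH_deriv_d fd_pos) auto
qed

lemma fH_mono_iff: assumes "v \<ge> 0" "-2*pi < a" "a < 2*pi" "-2*pi < b" "b < 2*pi"
  shows "fH v a < fH v b \<longleftrightarrow> a < b"
  using fH_mono[of v a b] fH_mono[of v b a] assms by (cases a b rule: linorder_cases) auto

lemma fH_inj: assumes "v \<ge> 0" "-2*pi < a" "a < 2*pi" "-2*pi < b" "b < 2*pi" "fH v a = fH v b"
  shows "a = b"
  using fH_mono[of v a b] fH_mono[of v b a] assms by (cases a b rule: linorder_cases) auto

lemma fH_big: assumes "v \<ge> 0" shows "\<exists>b. pi \<le> b \<and> b < 2*pi \<and> x \<le> fH v b"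
proof -
  define e where "e = 1 / (\<bar>x\<bar> + 1)"
  have e0: "0 < e" "e \<le> 1" unfolding e_def by (auto simp: field_simps)
  define b where "b = 2*pi - e"
  have bpi: "pi \<le> b" "b < 2*pi" "b \<noteq> 0" using e0 pi_gt3 unfolding b_def by auto
  have b2: "b/2 = pi - e/2" unfolding b_def by simp
  have sb: "sin (b/2) = sin (e/2)" unfolding b2 by simp
  have cb: "cos (b/2) = - cos (e/2)" unfolding b2 by simp
  have sinb: "sin b = - sin e" unfolding b_def by simp
  have se: "0 < sin (e/2)" "sin (e/2) \<le> e/2" using e0 pi_gt3 sin_x_le_x[of "e/2"] by (auto intro!: sin_gt_zero)
  have ce: "0 \<le> cos (e/2)" using e0 pi_gt3 by (intro cos_ge_zero) auto
  have sine: "0 \<le> sin e" using e0 pi_gt3 by (intro sin_ge_zero) auto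
  define N where "N = (v + 1) * (b - sin b) + 2 * sqrt v * (2 * sin (b/2) - b * cos (b/2))"
  have "b - sin b \<ge> pi" using sinb sine bpi by simp
  moreover have "2 * sin (b/2) - b * cos (b/2) \<ge> 0" using sb cb se ce bpi pi_gt3
    by (simp add: add_nonneg_nonneg)
  ultimately have N: "N \<ge> pi"
  proof -
    assume a1: "b - sin b \<ge> pi" and a2: "2 * sin (b/2) - b * cos (b/2) \<ge> 0"
    have "(v+1) * (b - sin b) \<ge> 1 * pi" using a1 assms by (intro mult_mono) auto
    moreover have "2 * sqrt v * (2 * sin (b/2) - b * cos (b/2)) \<ge> 0" using a2 assms by simp
    ultimately show ?thesis unfolding N_def by linarith
  qed
  have fHb: "fH v b = N / (2 * (sin (b/2))^2)" unfolding fH_def N_def using bpi by simp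
  have "(sin (b/2))^2 \<le> (e/2)^2" using se sb by (intro power_mono) auto
  then have "2 * (sin (b/2))^2 \<le> e^2/2" by (simp add: power_divide)
  moreover have pos: "0 < 2 * (sin (b/2))^2" using se sb by simp
  ultimately have "pi / (e^2/2) \<le> N / (2 * (sin (b/2))^2)"
    using N pi_gt3 by (intro frac_le) auto
  moreover have "pi / (e^2/2) = 2 * pi * (\<bar>x\<bar>+1)^2" unfolding e_def by (simp add: field_simps)
  moreover have "2 * pi * (\<bar>x\<bar>+1)^2 \<ge> x"
  proof -
    have "(\<bar>x\<bar>+1)^2 \<ge> (\<bar>x\<bar>+1)" unfolding power2_eq_square by (rule mult_le_cancel_left1[THEN iffD2]) auto
    moreover have "2 * pi \<ge> 1" using pi_gt3 by simp
    ultimately have "2 * pi * (\<bar>x\<bar>+1)^2 \<ge> 1 * (\<bar>x\<bar>+1)" by (intro mult_mono) auto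
    then show ?thesis by (smt (verit) abs_ge_self)
  qed
  ultimately show ?thesis using fHb bpi by (intro exI[of _ b]) auto
qed

lemma fH_surj: assumes "v \<ge> 0" shows "\<exists>d. -2*pi < d \<and> d < 2*pi \<and> fH v d = x"
proof -
  obtain b where b: "pi \<le> b" "b < 2*pi" "x \<le> fH v b" using fH_big assms by blast
  obtain a where a: "pi \<le> a" "a < 2*pi" "-x \<le> fH v a" using fH_big assms by blast
  define m where "m = max a b"
  have m: "pi \<le> m" "m < 2*pi" using a b unfolding m_def by auto
  have bm: "b \<le> m" "a \<le> m" unfolding m_def by auto
  have "fH v b \<le> fH v m"
    using fH_mono[of v b m] assms b m bm pi_gt3 by (cases "b = m") auto
  moreover have "fH v a \<le> fH v m"
    using fH_mono[of v a m] assms a m bm pi_gt3 by (cases "a = m") auto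
  ultimately have "fH v (-m) \<le> x" "x \<le> fH v m" using a b fH_odd[of v m] by auto
  moreover have "continuous_on {-m..m} (fH v)" using fH_cont assms m by auto
  ultimately obtain d where "-m \<le> d" "d \<le> m" "fH v d = x"
    using IVT'[of "fH v" "-m" x m] m pi_gt3 by auto
  then show ?thesis using m by (intro exI[of _ d]) auto
qed

lemma dH_ex1: assumes "v \<ge> 0" shows "\<exists>!d. -2*pi < d \<and> d < 2*pi \<and> fH v d = x"
  using fH_surj[OF assms] fH_inj[OF assms] by blast

lemma dH_prop: assumes "v \<ge> 0"
  shows "-2*pi < deltaH x v" "deltaH x v < 2*pi" "fH v (deltaH x v) = x"
  using theI'[OF dH_ex1[OF assms, of x]] unfolding deltaH_def by auto

lemma dH_fH: assumes "v \<ge> 0" "-2*pi < d" "d < 2*pi" shows "deltaH (fH v d) v = d"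
  unfolding deltaH_def using assms dH_ex1[OF assms(1)] by (intro the_equality) (auto intro: fH_inj)

lemma dH_eqI: assumes "v \<ge> 0" "-2*pi < d" "d < 2*pi" "fH v d = x" shows "deltaH x v = d"
  using dH_fH assms by blast

lemma eik_alg:
  fixes d s c w r F :: real
  assumes s: "s \<noteq> 0" and w: "w > 0" and r: "r > 0" and sc: "s^2 + c^2 = 1" and rr: "r^2 = 1 + w^2 - 2*w*c"
    and F: "F \<noteq> 0" and Fdef: "F = (w^2+1) * ((2* s - d*c)/(2* s^3)) + 2*w*((d*(1+c^2) - 4* s*c)/(4* s^3))"
  shows "w^2 * (( ((2* s - d*c)/(2* s^2) * r + d/s * (w* s) / (2*r)) / F)^2 +
     (d/s * (1 - c/w) / (2*r) - ((2* s - d*c)/(2* s^2) * r + d/s * (w* s) / (2*r)) * ((d - 2* s*c)/(2* s^2) + (2* s - d*c)/(2* s^2) / w) / F)^2) = 1"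
proof -
  define E where "E = (2* s - d*c)*(w^2+1) + (d*(1+c^2) - 4* s*c)*w"
  have FE: "F = E / (2* s^3)" unfolding Fdef E_def using s by (simp add: field_simps power2_eq_square power3_eq_cube)
  have E: "E \<noteq> 0" using F FE by auto
  have key: "4* s^4*w^2*((2* s - d*c)*r^2 + d*w* s^2)^2 + (d*(w-c)*E - ((2* s - d*c)*r^2 + d*w* s^2)*(w*(d - 2* s*c) + (2* s - d*c)))^2 = 4* s^2*r^2*E^2"
    unfolding E_def rr using sc by algebra
  define X where "X = (2* s - d*c)*r^2 + d*w* s^2"
  define K where "K = d*(w-c)*E - X*(w*(d - 2* s*c) + (2* s - d*c))"
  have h1: "((2* s - d*c)/(2* s^2) * r + d/s * (w* s) / (2*r)) / F = X* s/(E*r)"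
    unfolding FE X_def using s w r E by (simp add: field_simps power2_eq_square power3_eq_cube)
  have h2: "d/s * (1 - c/w) / (2*r) - ((2* s - d*c)/(2* s^2) * r + d/s * (w* s) / (2*r)) * ((d - 2* s*c)/(2* s^2) + (2* s - d*c)/(2* s^2) / w) / F
      = K/(2* s*w*r*E)"
    unfolding FE X_def K_def using s w r E by (simp add: field_simps power2_eq_square power3_eq_cube)
  have key2: "4* s^4*w^2*X^2 + K^2 = 4* s^2*r^2*E^2" using key unfolding X_def K_def .
  have "w^2 * ((X* s/(E*r))^2 + (K/(2* s*w*r*E))^2) = (4* s^4*w^2*X^2 + K^2) / (4* s^2*r^2*E^2)"
    using s w r E by (simp add: field_simps power2_eq_square power4_eq_xxxx)
  also have "\<dots> = 1" using key2 s r E by simp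
  finally show ?thesis unfolding h1 h2 .
qed

definition dHp :: "real \<times> real \<Rightarrow> real" where "dHp p = deltaH (fst p) (snd p)"

definition HH :: "real \<Rightarrow> real \<Rightarrow> real" where
  "HH d v = hh d * sqrt (1 + v - 2 * sqrt v * cos (d/2))"

definition Gc :: "real \<times> real \<Rightarrow> real" where "Gc p = HH (dHp p) (snd p)"

lemma fH_mono_le: assumes "v \<ge> 0" "-2*pi < a" "a \<le> b" "b < 2*pi" shows "fH v a \<le> fH v b"
  using fH_mono[of v a b] assms by (cases "a = b") auto

lemma fH_tendsto_v: "((\<lambda>p. fH (snd p) a) \<longlongrightarrow> fH (snd p0) a) F" if "(snd \<longlongrightarrow> snd p0) F" for F
  unfolding fH_eq by (intro tendsto_intros that)

lemma dH_tendsto: assumes "snd p0 \<ge> 0"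
  shows "(dHp \<longlongrightarrow> dHp p0) (at p0 within {p. snd p \<ge> 0})"
proof (rule order_tendstoI)
  let ?H = "{p::real\<times>real. snd p \<ge> 0}"
  have d0: "-2*pi < dHp p0" "dHp p0 < 2*pi" "fH (snd p0) (dHp p0) = fst p0"
    using dH_prop[OF assms] unfolding dHp_def by auto
  have sndt: "(snd \<longlongrightarrow> snd p0) (at p0 within ?H)" "(fst \<longlongrightarrow> fst p0) (at p0 within ?H)"
    by (intro tendsto_intros)+
  have evH: "eventually (\<lambda>p. p \<in> ?H) (at p0 within ?H)" by (simp add: eventually_at_filter)
  {
    fix a assume a: "a < dHp p0"
    define a' where "a' = max a ((dHp p0 - 2*pi)/2)"
    have "(dHp p0 - 2*pi)/2 > -2*pi" "(dHp p0 - 2*pi)/2 < dHp p0" using d0 by (auto simp: field_simps)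
    then have a': "-2*pi < a'" "a' < dHp p0" "a \<le> a'" using a unfolding a'_def
      by (simp_all add: less_max_iff_disj max_less_iff_conj)
    have "fH (snd p0) a' < fst p0" using fH_mono[OF assms a'(1,2) d0(2)] d0 by simp
    moreover have "((\<lambda>p. fst p - fH (snd p) a') \<longlongrightarrow> fst p0 - fH (snd p0) a') (at p0 within ?H)"
      by (intro tendsto_intros fH_tendsto_v sndt)
    ultimately have "eventually (\<lambda>p. fst p - fH (snd p) a' > 0) (at p0 within ?H)"
      by (intro order_tendstoD) auto
    with evH show "eventually (\<lambda>p. a < dHp p) (at p0 within ?H)"
    proof eventually_elim
      case (elim p)
      then have v: "snd p \<ge> 0" by simp
      have dp: "-2*pi < dHp p" "dHp p < 2*pi" "fH (snd p) (dHp p) = fst p"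
        using dH_prop[OF v] unfolding dHp_def by auto
      show ?case
      proof (rule ccontr)
        assume "\<not> a < dHp p"
        then have "dHp p \<le> a'" using a' by simp
        then have "fH (snd p) (dHp p) \<le> fH (snd p) a'" using fH_mono_le[OF v dp(1)] a' d0 by simp
        then show False using elim dp by simp
      qed
    qed
  }
  {
    fix a assume a: "a > dHp p0"
    define a' where "a' = min a ((dHp p0 + 2*pi)/2)"
    have "(dHp p0 + 2*pi)/2 < 2*pi" "(dHp p0 + 2*pi)/2 > dHp p0" using d0 by (auto simp: field_simps)
    then have a': "a' < 2*pi" "dHp p0 < a'" "a' \<le> a" using a unfolding a'_def
      by (simp_all add: min_less_iff_disj min_def)
    have "fH (snd p0) a' > fst p0" using fH_mono[OF assms d0(1) a'(2,1)] d0 by simp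
    moreover have "((\<lambda>p. fH (snd p) a' - fst p) \<longlongrightarrow> fH (snd p0) a' - fst p0) (at p0 within ?H)"
      by (intro tendsto_intros fH_tendsto_v sndt)
    ultimately have "eventually (\<lambda>p. fH (snd p) a' - fst p > 0) (at p0 within ?H)"
      by (intro order_tendstoD) auto
    with evH show "eventually (\<lambda>p. a > dHp p) (at p0 within ?H)"
    proof eventually_elim
      case (elim p)
      then have v: "snd p \<ge> 0" by simp
      have dp: "-2*pi < dHp p" "dHp p < 2*pi" "fH (snd p) (dHp p) = fst p"
        using dH_prop[OF v] unfolding dHp_def by auto
      show ?case
      proof (rule ccontr)
        assume "\<not> a > dHp p"
        then have "a' \<le> dHp p" using a' by simp
        then have "fH (snd p) a' \<le> fH (snd p) (dHp p)" using fH_mono_le[OF v _ _ dp(2)] a' d0 by simp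
        then show False using elim dp by simp
      qed
    qed
  }
qed

lemma hh_isCont: "-2*pi < d \<Longrightarrow> d < 2*pi \<Longrightarrow> isCont hh d"
  using hh_deriv DERIV_isCont by blast

lemma Gc_cont: "continuous_on {p. snd p \<ge> 0} Gc"
  unfolding continuous_on_def
proof
  fix p0 :: "real \<times> real" assume "p0 \<in> {p. snd p \<ge> 0}"
  then have v: "snd p0 \<ge> 0" by simp
  let ?H = "{p::real\<times>real. snd p \<ge> 0}"
  have d0: "-2*pi < dHp p0" "dHp p0 < 2*pi"
    using dH_prop[OF v] unfolding dHp_def by auto
  have t: "(dHp \<longlongrightarrow> dHp p0) (at p0 within ?H)" by (rule dH_tendsto[OF v])
  have "((\<lambda>p. hh (dHp p)) \<longlongrightarrow> hh (dHp p0)) (at p0 within ?H)"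
    by (rule isCont_tendsto_compose[OF hh_isCont[OF d0] t])
  moreover have "(snd \<longlongrightarrow> snd p0) (at p0 within ?H)" by (intro tendsto_intros)
  ultimately show "(Gc \<longlongrightarrow> Gc p0) (at p0 within ?H)"
    unfolding Gc_def[abs_def] HH_def by (intro tendsto_intros t; simp)
qed

definition fv :: "real \<Rightarrow> real \<Rightarrow> real" where "fv v d = PP d + QQ d / sqrt v"

lemma Phi_deriv:
  assumes v: "v > 0" and d: "-2*pi < d" "d < 2*pi"
  shows "((\<lambda>z::real\<times>real. (fH (snd z) (fst z), snd z)) has_derivative
           (\<lambda>h. (fd v d * fst h + fv v d * snd h, snd h))) (at (d, v))"
proof -
  have P: "((\<lambda>z::real\<times>real. PP (fst z)) has_derivative (\<lambda>h. fst h * PP' d)) (at (d,v))"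
    using DERIV_compose_FDERIV[where f=PP and g=fst and x="(d,v)" and f'="PP' d" and g'=fst and s=UNIV] PP_deriv[OF d]
      has_derivative_fst[OF has_derivative_ident] by simp blast
  have Q: "((\<lambda>z::real\<times>real. QQ (fst z)) has_derivative (\<lambda>h. fst h * QQ' d)) (at (d,v))"
    using DERIV_compose_FDERIV[where f=QQ and g=fst and x="(d,v)" and f'="QQ' d" and g'=fst and s=UNIV] QQ_deriv[OF d]
      has_derivative_fst[OF has_derivative_ident] by simp blast
  have S: "((\<lambda>z::real\<times>real. sqrt (snd z)) has_derivative (\<lambda>h. snd h * (inverse (sqrt v) / 2))) (at (d,v))"
    using DERIV_compose_FDERIV[where f=sqrt and g=snd and x="(d,v)" and f'="inverse (sqrt v) / 2" and g'=snd and s=UNIV] DERIV_real_sqrt[OF v]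
      has_derivative_snd[OF has_derivative_ident] by simp blast
  show ?thesis unfolding fH_eq
    apply (rule has_derivative_eq_rhs)
     apply (rule has_derivative_Pair has_derivative_add has_derivative_mult P Q S has_derivative_snd
        has_derivative_ident has_derivative_const)+
    using v by (auto simp: fun_eq_iff fd_def fv_def field_simps)
qed

lemma dH_deriv:
  assumes v: "v > 0"
  shows "((\<lambda>p. (dHp p, snd p)) has_derivative
     (\<lambda>h. ((fst h - fv v (deltaH x v) * snd h) / fd v (deltaH x v), snd h))) (at (x, v))"
proof -
  define d where "d = deltaH x v"
  have d: "-2*pi < d" "d < 2*pi" "fH v d = x" using dH_prop[of v x] v unfolding d_def by auto
  let ?S = "{-2*pi<..<2*pi} \<times> {0::real<..}"
  let ?f = "\<lambda>z::real\<times>real. (fH (snd z) (fst z), snd z)"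
  have fdnz: "fd v d \<noteq> 0" using fd_pos[of v d] v d by auto
  have "((\<lambda>p. (dHp p, snd p)) has_derivative (\<lambda>h. ((fst h - fv v d * snd h) / fd v d, snd h))) (at (?f (d,v)))"
  proof (rule has_derivative_inverse_strong[where S = ?S and f = ?f and x = "(d,v)" and f' = "\<lambda>h. (fd v d * fst h + fv v d * snd h, snd h)"])
    show "open ?S" by (intro open_Times) auto
    show "(d,v) \<in> ?S" using d v by auto
    show "continuous_on ?S ?f"
    proof (rule continuous_at_imp_continuous_on, rule ballI)
      fix z assume "z \<in> ?S"
      then obtain a b where z: "z = (a,b)" "-2*pi < a" "a < 2*pi" "b > 0" by auto
      show "isCont ?f z" unfolding z(1) by (rule has_derivative_continuous[OF Phi_deriv[OF z(4,2,3)]])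
    qed
    show "\<And>z. z \<in> ?S \<Longrightarrow> (dHp (?f z), snd (?f z)) = z"
      by (auto simp: dHp_def dH_fH)
    show "(?f has_derivative (\<lambda>h. (fd v d * fst h + fv v d * snd h, snd h))) (at (d, v))"
      by (rule Phi_deriv[OF v d(1,2)])
    show "(\<lambda>h. (fd v d * fst h + fv v d * snd h, snd h)) \<circ> (\<lambda>h. ((fst h - fv v d * snd h) / fd v d, snd h)) = id"
      using fdnz by (auto simp: fun_eq_iff field_simps)
  qed
  then show ?thesis using d unfolding d_def by simp
qed

lemma vd_fst: "(\<gamma> has_vector_derivative D) (at t) \<Longrightarrow> ((\<lambda>t. fst (\<gamma> t)) has_real_derivative fst D) (at t)"
  unfolding has_vector_derivative_def has_field_derivative_def
  by (drule has_derivative_fst) (auto elim: has_derivative_eq_rhs simp: fun_eq_iff)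

lemma vd_snd: "(\<gamma> has_vector_derivative D) (at t) \<Longrightarrow> ((\<lambda>t. snd (\<gamma> t)) has_real_derivative snd D) (at t)"
  unfolding has_vector_derivative_def has_field_derivative_def
  by (drule has_derivative_snd) (auto elim: has_derivative_eq_rhs simp: fun_eq_iff)

lemma dH_curve:
  assumes g: "(\<gamma> has_vector_derivative D) (at t)" and v: "snd (\<gamma> t) > 0"
  shows "((\<lambda>t. dHp (\<gamma> t)) has_real_derivative
     ((fst D - fv (snd (\<gamma> t)) (dHp (\<gamma> t)) * snd D) / fd (snd (\<gamma> t)) (dHp (\<gamma> t)))) (at t)"
proof -
  obtain x v where gt: "\<gamma> t = (x,v)" by (cases "\<gamma> t")
  have vp: "v > 0" using v gt by simp
  have g1: "(\<gamma> has_derivative (\<lambda>h. h *\<^sub>R D)) (at t)" using g by (simp add: has_vector_derivative_def)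
  have g2: "((\<lambda>p. (dHp p, snd p)) has_derivative
     (\<lambda>h. ((fst h - fv v (deltaH x v) * snd h) / fd v (deltaH x v), snd h))) (at (\<gamma> t))"
    unfolding gt by (rule dH_deriv[OF vp])
  have "((\<lambda>t. fst (((\<lambda>p. (dHp p, snd p)) \<circ> \<gamma>) t)) has_derivative
      (\<lambda>h. fst (((\<lambda>h. ((fst h - fv v (deltaH x v) * snd h) / fd v (deltaH x v), snd h)) \<circ> (\<lambda>h. h *\<^sub>R D)) h))) (at t)"
    by (rule has_derivative_fst[OF diff_chain_at[OF g1 g2]])
  then show ?thesis unfolding has_field_derivative_def gt
    by (auto elim!: has_derivative_eq_rhs simp: fun_eq_iff dHp_def field_simps)
qed

definition Rr :: "real \<Rightarrow> real \<Rightarrow> real" where "Rr d v = 1 + v - 2 * sqrt v * cos (d/2)"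
definition Hd :: "real \<Rightarrow> real \<Rightarrow> real" where
  "Hd d v = QQ d * sqrt (Rr d v) + hh d * (sqrt v * sin (d/2)) / (2 * sqrt (Rr d v))"
definition Hv :: "real \<Rightarrow> real \<Rightarrow> real" where
  "Hv d v = hh d * (1 - cos (d/2) / sqrt v) / (2 * sqrt (Rr d v))"
definition al :: "real \<Rightarrow> real \<Rightarrow> real" where "al d v = Hd d v / fd v d"
definition be :: "real \<Rightarrow> real \<Rightarrow> real" where "be d v = Hv d v - Hd d v * fv v d / fd v d"

lemma eikonal:
  assumes v: "v > 0" and d: "-2*pi < d" "d < 2*pi" and R: "Rr d v > 0"
  shows "v * ((al d v)^2 + (be d v)^2) = 1"
proof (cases "d = 0")
  case True
  define w where "w = sqrt v"
  have w: "w > 0" "v = w^2" using v unfolding w_def by auto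
  have Rw: "Rr d v = (w - 1)^2" unfolding Rr_def True w(2) using w by (simp add: power2_eq_square algebra_simps)
  have "w \<noteq> 1" using R Rw by auto
  then have sR: "sqrt (Rr d v) = \<bar>w - 1\<bar>" "\<bar>w - 1\<bar> > 0" unfolding Rw by auto
  have "Hd d v = 0" unfolding Hd_def True by (simp add: QQ_def)
  then have "al d v = 0" "be d v = Hv d v" unfolding al_def be_def by auto
  moreover have "Hv d v = (1 - 1/w) / \<bar>w - 1\<bar>"
  proof -
    have sR0: "sqrt (Rr 0 v) = \<bar>w - 1\<bar>" using sR(1) True by simp
    have h: "\<And>a. (2 - 2/w)/(2*a) = (1 - 1/w)/a"
    proof -
      fix a :: real
      have "(2 - 2/w) = 2 * (1 - 1/w)" by simp
      then show "(2 - 2/w)/(2*a) = (1 - 1/w)/a" by (simp only: mult_divide_mult_cancel_left_if) simp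
    qed
    show ?thesis unfolding Hv_def True w_def[symmetric] by (simp add: hh_def sR0 h)
  qed
  ultimately have a: "al d v = 0" "be d v = (1 - 1/w) / \<bar>w - 1\<bar>" by auto
  have e0: "w * ((1 - 1/w) / \<bar>w - 1\<bar>) = (w - 1) / \<bar>w - 1\<bar>" using w(1) sR(2) by (simp add: field_simps)
  have e1: "w * be d v = (w - 1) / \<bar>w - 1\<bar>" by (subst a(2)) (rule e0)
  have "((w - 1) / \<bar>w - 1\<bar>)^2 = 1" using sR(2) by (simp add: power_divide)
  then have "(w * be d v)^2 = 1" by (subst e1)
  then show ?thesis using a w(2) by (simp add: power_mult_distrib)
next
  case False
  have s: "sin (d/2) \<noteq> 0" using sin_half_nz d False by blast
  have w: "sqrt v > 0" using v by simp
  have r: "sqrt (Rr d v) > 0" using R by simp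
  have rr: "(sqrt (Rr d v))^2 = 1 + (sqrt v)^2 - 2 * sqrt v * cos (d/2)" using R v unfolding Rr_def by simp
  have F: "fd v d \<noteq> 0" using fd_pos[of v d] v d by simp
  have Fdef: "fd v d = ((sqrt v)^2+1) * ((2 * sin (d/2) - d * cos (d/2))/(2 * (sin (d/2))^3)) +
       2 * sqrt v * ((d * (1 + (cos (d/2))^2) - 4 * sin (d/2) * cos (d/2))/(4 * (sin (d/2))^3))"
    unfolding fd_def PP'_def QQ'_def using False v by simp
  note E = eik_alg[OF s w r sin_cos_squared_add rr F Fdef]
  show ?thesis using E False v unfolding al_def be_def Hd_def Hv_def fv_def QQ_def hh_def PP_def
    by simp
qed

lemma cs_ineq: "\<bar>a * x + b * y\<bar> \<le> sqrt (a^2 + b^2) * sqrt (x^2 + y^2)" for a b x y :: real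
proof -
  have "(a * x + b * y)^2 \<le> (a^2 + b^2) * (x^2 + y^2)"
  proof -
    have "0 \<le> (a * y - b * x)^2" by simp
    then show ?thesis by (simp add: power2_eq_square algebra_simps)
  qed
  then have "sqrt ((a * x + b * y)^2) \<le> sqrt ((a^2 + b^2) * (x^2 + y^2))" by (rule real_sqrt_le_mono)
  then show ?thesis by (simp add: real_sqrt_mult)
qed

lemma grad_bound:
  assumes v: "v > 0" and e: "v * (a^2 + b^2) = 1"
  shows "\<bar>a * x + b * y\<bar> \<le> norm (x, y) / sqrt v"
proof -
  have "a^2 + b^2 = 1 / v" using e v by (simp add: field_simps)
  then have "sqrt (a^2 + b^2) = 1 / sqrt v" by (simp add: real_sqrt_divide)
  then show ?thesis using cs_ineq[of a x b y] by (simp add: norm_Pair)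
qed

lemma hh_chain: "(g has_real_derivative g') (at t) \<Longrightarrow> -2*pi < g t \<Longrightarrow> g t < 2*pi \<Longrightarrow>
    ((\<lambda>t. hh (g t)) has_real_derivative QQ (g t) * g') (at t)"
  by (rule DERIV_chain2[OF hh_deriv])

lemma Gc_curve:
  assumes g: "(\<gamma> has_vector_derivative D) (at t)" and v: "snd (\<gamma> t) > 0"
    and R: "Rr (dHp (\<gamma> t)) (snd (\<gamma> t)) > 0"
  shows "((\<lambda>t. Gc (\<gamma> t)) has_real_derivative
      (al (dHp (\<gamma> t)) (snd (\<gamma> t)) * fst D + be (dHp (\<gamma> t)) (snd (\<gamma> t)) * snd D)) (at t)"
proof -
  define d where "d = dHp (\<gamma> t)"
  define vv where "vv = snd (\<gamma> t)"
  define d' where "d' = (fst D - fv vv d * snd D) / fd vv d"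
  have rng: "-2*pi < d" "d < 2*pi" using dH_prop[of vv] v unfolding d_def vv_def dHp_def by auto
  have F: "fd vv d \<noteq> 0" using fd_pos[of vv d] v rng unfolding vv_def by simp
  have dd: "((\<lambda>t. dHp (\<gamma> t)) has_real_derivative d') (at t)"
    using dH_curve[OF g v] unfolding d'_def d_def vv_def .
  have vd: "((\<lambda>t. snd (\<gamma> t)) has_real_derivative snd D) (at t)" by (rule vd_snd[OF g])
  have hc: "((\<lambda>t. hh (dHp (\<gamma> t))) has_real_derivative QQ d * d') (at t)"
    using hh_chain[OF dd] rng unfolding d_def by simp
  have vp: "vv > 0" using v unfolding vv_def .
  have Rp: "Rr d vv > 0" using R unfolding d_def vv_def .
  have sq: "sqrt vv > 0" "sqrt (Rr d vv) > 0" using vp Rp by auto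
  have rhs: "al d vv * fst D + be d vv * snd D = Hd d vv * d' + Hv d vv * snd D"
    unfolding al_def be_def d'_def using F by (simp add: field_simps)
  define R' where "R' = snd D - snd D * cos (d/2) / sqrt vv + sqrt vv * sin (d/2) * d'"
  have Rd: "((\<lambda>t. 1 + snd (\<gamma> t) - 2 * sqrt (snd (\<gamma> t)) * cos (dHp (\<gamma> t) / 2)) has_real_derivative R') (at t)"
  proof -
    have vp': "0 < snd (\<gamma> t)" using v .
    have c1: "((\<lambda>t. dHp (\<gamma> t) / 2) has_real_derivative d'/2) (at t)" using DERIV_cdivide[OF dd, of 2] by simp
    have c2: "((\<lambda>t. cos (dHp (\<gamma> t) / 2)) has_real_derivative -sin (d/2) * (d'/2)) (at t)"
      using DERIV_chain2[OF DERIV_cos c1] unfolding d_def by simp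
    have s1: "((\<lambda>t. sqrt (snd (\<gamma> t))) has_real_derivative inverse (sqrt vv) / 2 * snd D) (at t)"
      using DERIV_chain2[OF DERIV_real_sqrt[OF vp'] vd] unfolding vv_def by simp
    show ?thesis unfolding R'_def
      apply (rule DERIV_cong)
       apply (rule DERIV_diff DERIV_add DERIV_const DERIV_mult vd s1 c2)+
      using sq unfolding d_def[symmetric] vv_def[symmetric] by (simp add: field_simps)
  qed
  have Sd: "((\<lambda>t. sqrt (1 + snd (\<gamma> t) - 2 * sqrt (snd (\<gamma> t)) * cos (dHp (\<gamma> t) / 2))) has_real_derivative
      R' * (inverse (sqrt (Rr d vv)) / 2)) (at t)"
  proof -
    have Rp': "0 < 1 + snd (\<gamma> t) - 2 * sqrt (snd (\<gamma> t)) * cos (dHp (\<gamma> t) / 2)"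
      using Rp unfolding Rr_def d_def vv_def .
    show ?thesis using DERIV_chain2[OF DERIV_real_sqrt[OF Rp'] Rd] unfolding Rr_def d_def vv_def by (simp add: mult.commute)
  qed
  have "((\<lambda>t. Gc (\<gamma> t)) has_real_derivative Hd d vv * d' + Hv d vv * snd D) (at t)"
    unfolding Gc_def HH_def
    apply (rule DERIV_cong[OF DERIV_mult[OF hc Sd]])
  proof -
    define r where "r = sqrt (Rr d vv)"
    have r: "r > 0" "Rr d vv = r^2" using Rp unfolding r_def by auto
    show "QQ d * d' * sqrt (1 + snd (\<gamma> t) - 2 * sqrt (snd (\<gamma> t)) * cos (dHp (\<gamma> t) / 2)) +
      R' * (inverse (sqrt (Rr d vv)) / 2) * hh (dHp (\<gamma> t)) =
      Hd d vv * d' + Hv d vv * snd D"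
      using sq(1) r(1) unfolding Hd_def Hv_def R'_def d_def[symmetric] vv_def[symmetric] Rr_def[symmetric] r(2)
      by (simp add: field_simps)
  qed
  then show ?thesis by (simp only: d_def[symmetric] vv_def[symmetric] rhs)
qed

lemma dH_01: "dHp (0,1) = 0"
  unfolding dHp_def by (rule dH_eqI) (auto simp: fH_def)

lemma Gc_01: "Gc (0,1) = 0"
  unfolding Gc_def HH_def by (simp add: dH_01 hh_def)

lemma Rr_pos:
  assumes v: "snd p \<ge> 0" and p: "p \<noteq> (0,1)"
  shows "Rr (dHp p) (snd p) > 0"
proof -
  define d where "d = dHp p"
  define w where "w = sqrt (snd p)"
  have rng: "-2*pi < d" "d < 2*pi" "fH (snd p) d = fst p" using dH_prop[OF v] unfolding d_def dHp_def by auto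
  have w: "w \<ge> 0" "w^2 = snd p" using v unfolding w_def by auto
  have eq: "Rr d (snd p) = (w - cos (d/2))^2 + (sin (d/2))^2"
    unfolding Rr_def w_def[symmetric] w(2)[symmetric] using sin_cos_squared_add[of "d/2"] w(1)
    by (simp add: power2_eq_square algebra_simps)
  show ?thesis
  proof (rule ccontr)
    assume "\<not> ?thesis"
    then have "(w - cos (d/2))^2 + (sin (d/2))^2 \<le> 0" using eq unfolding d_def by simp
    then have s0: "sin (d/2) = 0" and c: "w = cos (d/2)"
      by (smt (verit) zero_le_power2 power2_less_eq_zero_iff)+
    then have d0: "d = 0" using sin_half_nz rng by blast
    then have "w = 1" using c by simp
    then have "snd p = 1" using w by simp
    moreover have "fst p = 0" using rng d0 by (simp add: fH_def)
    ultimately show False using p by (cases p) auto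
  qed
qed

lemma LB:
  fixes \<gamma> :: "real \<Rightarrow> real \<times> real"
  assumes pc: "\<gamma> piecewise_C1_differentiable_on {0..1}" and g0: "\<gamma> 0 = (0,1)" and g1: "\<gamma> 1 = q"
    and pos: "\<forall>t\<in>{0<..<1}. snd (\<gamma> t) > 0"
    and hi: "((\<lambda>t. norm (vector_derivative \<gamma> (at t)) / sqrt (snd (\<gamma> t))) has_integral L) {0..1}"
    and q: "snd q \<ge> 0" "q \<noteq> (0,1)"
  shows "Gc q \<le> L"
proof -
  let ?l = "\<lambda>t. norm (vector_derivative \<gamma> (at t)) / sqrt (snd (\<gamma> t))"
  have cont: "continuous_on {0..1} \<gamma>" using pc unfolding piecewise_C1_differentiable_on_def by blast
  obtain S where S: "finite S" "\<gamma> C1_differentiable_on {0..1} - S"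
    using pc unfolding piecewise_C1_differentiable_on_def by blast
  obtain Dg where Dg: "\<And>t. t \<in> {0..1} - S \<Longrightarrow> (\<gamma> has_vector_derivative Dg t) (at t)"
    using S(2) unfolding C1_differentiable_on_def by blast
  define T where "T = {t \<in> {0..1}. \<gamma> t = (0,1)}"
  have Tc: "closed T" unfolding T_def by (rule continuous_closed_preimage_constant[OF cont]) auto
  have T0: "0 \<in> T" using g0 unfolding T_def by auto
  have Tb: "bdd_above T" unfolding T_def by (rule bdd_aboveI[of _ 1]) auto
  define t0 where "t0 = Sup T"
  have t0T: "t0 \<in> T" unfolding t0_def using closed_contains_Sup[OF _ Tb Tc] T0 by auto
  have t0ge: "0 \<le> t0" unfolding t0_def using cSup_upper[OF T0 Tb] .
  have t01: "t0 < 1"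
  proof -
    have "t0 \<le> 1" using t0T unfolding T_def by auto
    moreover have "t0 \<noteq> 1" using t0T g1 q(2) unfolding T_def by auto
    ultimately show ?thesis by simp
  qed
  have notT: "\<gamma> t \<noteq> (0,1)" if "t0 < t" "t \<le> 1" for t
  proof
    assume "\<gamma> t = (0,1)"
    then have "t \<in> T" unfolding T_def using that t0ge by auto
    then have "t \<le> t0" unfolding t0_def using cSup_upper[OF _ Tb] by auto
    then show False using that by simp
  qed
  have inH: "\<gamma> t \<in> {p. snd p \<ge> 0}" if "t \<in> {0..1}" for t
  proof (cases "t = 0 \<or> t = 1")
    case True then show ?thesis using g0 g1 q by auto
  next
    case False then show ?thesis using that pos by (auto simp: less_imp_le)
  qed
  have gc: "continuous_on {t0..1} (\<lambda>t. Gc (\<gamma> t))"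
    by (rule continuous_on_compose2[OF Gc_cont continuous_on_subset[OF cont]]) (use inH t0ge in auto)
  define gd where "gd t = al (dHp (\<gamma> t)) (snd (\<gamma> t)) * fst (Dg t) + be (dHp (\<gamma> t)) (snd (\<gamma> t)) * snd (Dg t)" for t
  have props: "((\<lambda>t. Gc (\<gamma> t)) has_real_derivative gd t) (at t) \<and> gd t \<le> ?l t"
    if t: "t \<in> {t0<..<1} - S" for t
  proof -
    have tI: "t \<in> {0..1} - S" using t t0ge by auto
    have v: "snd (\<gamma> t) > 0" using pos t t0ge by auto
    have R: "Rr (dHp (\<gamma> t)) (snd (\<gamma> t)) > 0" using Rr_pos[of "\<gamma> t"] v notT[of t] t by auto
    have rng: "-2*pi < dHp (\<gamma> t)" "dHp (\<gamma> t) < 2*pi" using dH_prop[of "snd (\<gamma> t)"] v unfolding dHp_def by auto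
    have der: "((\<lambda>t. Gc (\<gamma> t)) has_real_derivative gd t) (at t)"
      unfolding gd_def by (rule Gc_curve[OF Dg[OF tI] v R])
    have vd: "vector_derivative \<gamma> (at t) = Dg t" by (rule vector_derivative_at[OF Dg[OF tI]])
    have e: "snd (\<gamma> t) * ((al (dHp (\<gamma> t)) (snd (\<gamma> t)))^2 + (be (dHp (\<gamma> t)) (snd (\<gamma> t)))^2) = 1"
      by (rule eikonal[OF v rng R])
    have "\<bar>gd t\<bar> \<le> norm (fst (Dg t), snd (Dg t)) / sqrt (snd (\<gamma> t))"
      unfolding gd_def by (rule grad_bound[OF v e])
    then have "gd t \<le> ?l t" using vd by simp
    with der show ?thesis by blast
  qed
  have ftc: "(gd has_integral (Gc (\<gamma> 1) - Gc (\<gamma> t0))) {t0..1}"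
    by (rule fundamental_theorem_of_calculus_interior_strong[OF S(1)])
       (use t01 gc props in \<open>auto simp: has_real_derivative_iff_has_vector_derivative\<close>)
  define gd2 where "gd2 t = (if t \<in> {t0<..<1} - S then gd t else 0)" for t
  have ftc2: "(gd2 has_integral (Gc (\<gamma> 1) - Gc (\<gamma> t0))) {t0..1}"
    by (rule has_integral_spike_finite[of "S \<union> {t0, 1}", OF _ _ ftc]) (use S(1) in \<open>auto simp: gd2_def\<close>)
  have lint: "?l integrable_on {t0..1}"
    by (rule integrable_subinterval_real[of _ 0 1]) (use hi t0ge in \<open>auto simp: has_integral_integrable\<close>)
  have lnn: "0 \<le> ?l t" if "t \<in> {0..1}" for t using inH[OF that] by simp
  have "Gc (\<gamma> 1) - Gc (\<gamma> t0) \<le> integral {t0..1} ?l"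
    by (rule has_integral_le[OF ftc2 integrable_integral[OF lint]]) (use props lnn t0ge in \<open>auto simp: gd2_def\<close>)
  also have "\<dots> \<le> integral {0..1} ?l"
    by (rule integral_subset_le) (use t0ge lint hi lnn in \<open>auto simp: has_integral_integrable\<close>)
  also have "\<dots> = L" using hi by (simp add: integral_unique)
  finally show ?thesis using g1 t0T Gc_01 unfolding T_def by simp
qed

definition HS :: "real \<times> real \<Rightarrow> real \<times> real \<Rightarrow> real set" where
  "HS p q = {L. \<exists>\<gamma>::real \<Rightarrow> real \<times> real.
      \<gamma> piecewise_C1_differentiable_on {0..1} \<and> \<gamma> 0 = p \<and> \<gamma> 1 = q \<and>
      (\<forall>t\<in>{0<..<1}. snd (\<gamma> t) > 0) \<and>
      ((\<lambda>t. norm (vector_derivative \<gamma> (at t)) / sqrt (snd (\<gamma> t))) has_integral L) {0..1}}"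

lemma hyp_dist_HS: "hyp_dist p q = Inf (HS p q)"
  unfolding hyp_dist_def HS_def ..

lemma HS_nonneg: assumes "L \<in> HS (0,1) q" "snd q \<ge> 0" shows "0 \<le> L"
proof -
  obtain \<gamma> where g: "\<gamma> 0 = (0,1)" "\<gamma> 1 = q" "\<forall>t\<in>{0<..<1}. snd (\<gamma> t) > 0"
    "((\<lambda>t. norm (vector_derivative \<gamma> (at t)) / sqrt (snd (\<gamma> t))) has_integral L) {0..1}"
    using assms(1) unfolding HS_def by blast
  have "snd (\<gamma> t) \<ge> 0" if "t \<in> {0..1}" for t
    using g assms(2) that by (cases "t = 0 \<or> t = 1") (auto simp: less_imp_le)
  then show ?thesis by (intro has_integral_nonneg[OF g(4)]) auto
qed

lemma HS_Gc: assumes "L \<in> HS (0,1) q" "snd q \<ge> 0" "q \<noteq> (0,1)" shows "Gc q \<le> L"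
proof -
  obtain \<gamma> where g: "\<gamma> piecewise_C1_differentiable_on {0..1}" "\<gamma> 0 = (0,1)" "\<gamma> 1 = q" "\<forall>t\<in>{0<..<1}. snd (\<gamma> t) > 0"
    "((\<lambda>t. norm (vector_derivative \<gamma> (at t)) / sqrt (snd (\<gamma> t))) has_integral L) {0..1}"
    using assms(1) unfolding HS_def by blast
  show ?thesis by (rule LB[OF g assms(2,3)])
qed

lemma Rr_eq: "v \<ge> 0 \<Longrightarrow> Rr d v = (sqrt v - cos (d/2))^2 + (sin (d/2))^2"
  unfolding Rr_def using sin_cos_squared_add[of "d/2"]
  by (simp add: power2_eq_square algebra_simps)

lemma cos_half_nonpos: assumes "pi \<le> \<bar>t\<bar>" "\<bar>t\<bar> < 2*pi" shows "cos (t/2) \<le> 0"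
proof -
  define y where "y = \<bar>t\<bar>/2"
  have y: "pi/2 \<le> y" "y < pi" using assms unfolding y_def by auto
  have "cos (t/2) = cos y" unfolding y_def by (cases "t \<ge> 0") auto
  moreover have "cos y = - cos (pi - y)" by simp
  moreover have "0 \<le> cos (pi - y)" by (rule cos_ge_zero) (use y in auto)
  ultimately show ?thesis by linarith
qed

definition target :: "real \<Rightarrow> real" where
  "target t = (if \<bar>t\<bar> < pi then \<bar>t\<bar> else t / sin (t/2))"

lemma Gc_lower:
  assumes v: "snd q \<ge> 0" and d: "dHp q = th" and th: "th \<noteq> 0"
  shows "target th \<le> Gc q"
proof -
  have rng: "-2*pi < th" "th < 2*pi" using dH_prop[OF v] d unfolding dHp_def by auto
  have s: "sin (th/2) \<noteq> 0" using sin_half_nz rng th by blast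
  have hp: "th / sin (th/2) > 0" using half_facts(2)[OF rng th] .
  have G: "Gc q = th / sin (th/2) * sqrt (Rr th (snd q))"
    unfolding Gc_def HH_def Rr_def d using th by (simp add: hh_def)
  show ?thesis
  proof (cases "\<bar>th\<bar> < pi")
    case True
    have "sqrt (Rr th (snd q)) \<ge> sqrt ((sin (th/2))^2)"
      unfolding Rr_eq[OF v] by (rule real_sqrt_le_mono) simp
    then have "sqrt (Rr th (snd q)) \<ge> \<bar>sin (th/2)\<bar>" by simp
    then have "th / sin (th/2) * sqrt (Rr th (snd q)) \<ge> th / sin (th/2) * \<bar>sin (th/2)\<bar>"
      using hp by (intro mult_left_mono) auto
    moreover have "th / sin (th/2) * \<bar>sin (th/2)\<bar> = \<bar>th\<bar>"
    proof -
      have "th / sin (th/2) * \<bar>sin (th/2)\<bar> = \<bar>th / sin (th/2)\<bar> * \<bar>sin (th/2)\<bar>" using hp by (simp only: abs_of_pos[OF hp])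
      also have "\<dots> = \<bar>th / sin (th/2) * sin (th/2)\<bar>" by (rule abs_mult[symmetric])
      also have "\<dots> = \<bar>th\<bar>" using s by simp
      finally show ?thesis .
    qed
    ultimately show ?thesis using True G unfolding target_def by simp
  next
    case False
    have c: "cos (th/2) \<le> 0" using cos_half_nonpos False rng by auto
    have "sqrt (snd q) * cos (th/2) \<le> 0" using c v by (intro mult_nonneg_nonpos) auto
    then have "Rr th (snd q) \<ge> 1" unfolding Rr_def using v by linarith
    then have "sqrt (Rr th (snd q)) \<ge> 1" by simp
    then have "th / sin (th/2) * sqrt (Rr th (snd q)) \<ge> th / sin (th/2) * 1"
      using hp by (intro mult_left_mono) auto
    then show ?thesis using False G unfolding target_def by simp
  qed
qed

lemma GammaH_L:
  assumes q: "q \<in> GammaH th" and L: "L \<in> HS (0,1) q" and rng: "-2*pi < th" "th < 2*pi"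
  shows "target th \<le> L"
proof -
  obtain x v where qv: "q = (x,v)" "v \<ge> 0" "deltaH x v = th" using q unfolding GammaH_def by auto
  show ?thesis
  proof (cases "th = 0")
    case True
    then show ?thesis using HS_nonneg[OF L] qv unfolding target_def by simp
  next
    case False
    have "q \<noteq> (0,1)" using False qv dH_01 unfolding dHp_def by auto
    then have "Gc q \<le> L" using HS_Gc[OF L] qv by simp
    moreover have "target th \<le> Gc q" using Gc_lower[of q th] qv False unfolding dHp_def by simp
    ultimately show ?thesis by simp
  qed
qed

lemma curve_HS:
  fixes X V X' V' :: "real \<Rightarrow> real"
  assumes dX: "\<And>t. (X has_real_derivative X' t) (at t)" and dV: "\<And>t. (V has_real_derivative V' t) (at t)"
    and cX: "continuous_on {0..1} X'" and cV: "continuous_on {0..1} V'"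
    and e: "X 0 = 0" "V 0 = 1" "X 1 = x1" "V 1 = v1"
    and pos: "\<forall>t\<in>{0<..<1}. V t > 0"
    and int: "((\<lambda>t. norm (X' t, V' t) / sqrt (V t)) has_integral L) {0..1}"
  shows "L \<in> HS (0,1) (x1,v1)"
proof -
  define \<gamma> where "\<gamma> t = (X t, V t)" for t
  have vd: "(\<gamma> has_vector_derivative (X' t, V' t)) (at t)" for t
    unfolding \<gamma>_def by (intro has_vector_derivative_Pair) (use dX dV in \<open>auto simp: has_real_derivative_iff_has_vector_derivative\<close>)
  have "\<gamma> C1_differentiable_on {0..1}"
    unfolding C1_differentiable_on_def
    by (rule exI[of _ "\<lambda>t. (X' t, V' t)"]) (use vd cX cV in \<open>auto intro: continuous_on_Pair\<close>)
  then have pc: "\<gamma> piecewise_C1_differentiable_on {0..1}" by (rule C1_differentiable_imp_piecewise)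
  have "vector_derivative \<gamma> (at t) = (X' t, V' t)" for t by (rule vector_derivative_at[OF vd])
  then have "((\<lambda>t. norm (vector_derivative \<gamma> (at t)) / sqrt (snd (\<gamma> t))) has_integral L) {0..1}"
    using int by (simp add: \<gamma>_def)
  then show ?thesis unfolding HS_def using pc e pos by (intro CollectI exI[of _ \<gamma>]) (auto simp: \<gamma>_def)
qed

lemma HS_nonempty: assumes v: "v \<ge> 0" shows "HS (0,1) (x,v) \<noteq> {}"
proof -
  define w where "w = sqrt v"
  have w: "w \<ge> 0" "w^2 = v" using v unfolding w_def by auto
  define K where "K = 2 * x / (1 + w)"
  define c where "c = sqrt (K^2 + 4 * (w - 1)^2)"
  have "((\<lambda>t. norm (K * (1 - t + w * t), 2 * (1 - t + t * w) * (w - 1)) / sqrt ((1 - t + t * w)^2)) has_integral c) {0..1}"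
  proof (rule has_integral_spike_finite[of "{1}", OF _ _ has_integral_const_real[of c 0 1, simplified]])
    fix t :: real assume t: "t \<in> {0..1} - {1}"
    define y where "y = 1 - t + t * w"
    have y: "y > 0" using t w unfolding y_def by (auto intro: add_pos_nonneg)
    have "norm (K * (1 - t + w * t), 2 * (1 - t + t * w) * (w - 1)) = sqrt (y^2 * (K^2 + 4 * (w - 1)^2))"
      unfolding norm_Pair y_def by (simp add: power2_eq_square algebra_simps)
    also have "\<dots> = y * c" using y unfolding c_def by (simp add: real_sqrt_mult)
    finally show "norm (K * (1 - t + w * t), 2 * (1 - t + t * w) * (w - 1)) / sqrt ((1 - t + t * w)^2) = c"
      using y unfolding y_def by simp
  qed simp
  moreover have "c \<in> HS (0,1) (x,v)"
    apply (rule curve_HS[where X = "\<lambda>t. K * (t - t^2/2 + w * t^2/2)" and V = "\<lambda>t. (1 - t + t * w)^2"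
        and X' = "\<lambda>t. K * (1 - t + w * t)" and V' = "\<lambda>t. 2 * (1 - t + t * w) * (w - 1)"])
    subgoal for t by (rule derivative_eq_intros refl | simp add: algebra_simps)+
    subgoal for t by (rule derivative_eq_intros refl | simp add: algebra_simps)+
    subgoal by (intro continuous_intros)
    subgoal by (intro continuous_intros)
    subgoal by simp
    subgoal by simp
    subgoal unfolding K_def using w by (simp add: field_simps)
    subgoal using w by simp
    subgoal using w by auto (smt (verit, best) mult_nonneg_nonneg)
    subgoal using calculation .
    done
  ultimately show ?thesis by blast
qed

lemma curve_small:
  assumes th: "\<bar>th\<bar> < pi"
  shows "\<bar>th\<bar> \<in> HS (0,1) ((th + sin th)/2, (cos (th/2))^2)"
proof -
  have cpos: "cos (t*th/2) > 0" if "t \<in> {0..1}" for t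
  proof -
    have "\<bar>t*th\<bar> \<le> \<bar>th\<bar>" using that by (auto simp: abs_mult intro: mult_left_le_one_le)
    then have "\<bar>t*th/2\<bar> < pi/2" using th by simp
    then show ?thesis by (intro cos_gt_zero_pi) auto
  qed
  have int: "((\<lambda>t. norm ((th + th * cos (t*th))/2, -(th * cos (t*th/2) * sin (t*th/2))) / sqrt ((cos (t*th/2))^2))
      has_integral \<bar>th\<bar>) {0..1}"
  proof (rule has_integral_spike_finite[of "{}", OF _ _ has_integral_const_real[of "\<bar>th\<bar>" 0 1, simplified]])
    fix t :: real assume t: "t \<in> {0..1} - {}"
    define c where "c = cos (t*th/2)"
    define s where "s = sin (t*th/2)"
    have c: "c > 0" using cpos t unfolding c_def by auto
    have sc: "s^2 + c^2 = 1" unfolding s_def c_def by simp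
    have cd: "cos (t*th) = 1 - 2 * s^2" unfolding s_def using cos_double_half[of "t*th"] by simp
    have sq: "((th + th * cos (t*th))/2)^2 + (-(th * c * s))^2 = (th * c)^2"
      unfolding cd using sc by algebra
    have "norm ((th + th * cos (t*th))/2, -(th * c * s)) = \<bar>th\<bar> * c"
      unfolding norm_Pair real_norm_def power2_abs sq using c by (simp add: abs_mult)
    then show "norm ((th + th * cos (t*th))/2, -(th * cos (t*th/2) * sin (t*th/2))) / sqrt ((cos (t*th/2))^2) = \<bar>th\<bar>"
      using c unfolding c_def s_def by simp
  qed simp
  show ?thesis
    apply (rule curve_HS[where X = "\<lambda>t. (t*th + sin (t*th))/2" and V = "\<lambda>t. (cos (t*th/2))^2"
        and X' = "\<lambda>t. (th + th * cos (t*th))/2" and V' = "\<lambda>t. -(th * cos (t*th/2) * sin (t*th/2))"])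
    subgoal for t by (rule derivative_eq_intros refl | simp add: algebra_simps)+
    subgoal for t by (rule derivative_eq_intros refl | simp add: algebra_simps)+
    subgoal by (intro continuous_intros) auto
    subgoal by (intro continuous_intros) auto
    subgoal by simp
    subgoal by simp
    subgoal by simp
    subgoal by simp
    subgoal
    proof
      fix t :: real assume "t \<in> {0<..<1}"
      then have "cos (t*th/2) > 0" using cpos by auto
      then show "0 < (cos (t*th/2))^2" by simp
    qed
    subgoal using int .
    done
qed

lemma curve_large:
  assumes th: "pi \<le> \<bar>th\<bar>" "\<bar>th\<bar> < 2*pi"
  shows "th / sin (th/2) \<in> HS (0,1) ((th - sin th) / (1 - cos th), 0)"
proof -
  define \<sigma> where "\<sigma> = sin (th/2)"
  have rng: "-2*pi < th" "th < 2*pi" "th \<noteq> 0" using th pi_gt_zero by auto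
  have sg: "\<sigma> \<noteq> 0" unfolding \<sigma>_def using sin_half_nz rng by blast
  have hp: "th / \<sigma> > 0" unfolding \<sigma>_def using half_facts(2)[OF rng] .
  have Snz: "sin (th*(1-t)/2) \<noteq> 0" if "t \<in> {0..<1}" for t
  proof
    assume z: "sin (th*(1-t)/2) = 0"
    have "\<bar>th*(1-t)\<bar> \<le> \<bar>th\<bar>" using that by (auto simp: abs_mult intro!: mult_left_le)
    then have "\<bar>th*(1-t)/2\<bar> < pi" using th(2) by linarith
    then have b: "-pi < th*(1-t)/2" "th*(1-t)/2 < pi" by linarith+
    have "th*(1-t)/2 = 0" by (rule sin_eq_0_pi[OF b z])
    then show False using rng(3) that by simp
  qed
  have cdh: "1 - cos th = 2 * \<sigma>^2" unfolding \<sigma>_def using cos_double_half[of th] by simp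
  define k where "k = 1 / (2*\<sigma>^2)"
  define m where "m = 1 / \<sigma>^2"
  have int0: "((\<lambda>t. norm ((th - th * cos (th*(1-t)))/(2*\<sigma>^2), -(th * sin (th*(1-t)/2) * cos (th*(1-t)/2))/\<sigma>^2)
       / sqrt ((sin (th*(1-t)/2))^2/\<sigma>^2)) has_integral th/\<sigma>) {0..1}"
  proof (rule has_integral_spike_finite[of "{1}", OF _ _ has_integral_const_real[of "th/\<sigma>" 0 1, simplified]])
    fix t :: real assume t: "t \<in> {0..1} - {1}"
    define S where "S = sin (th*(1-t)/2)"
    define C where "C = cos (th*(1-t)/2)"
    have S: "S \<noteq> 0" using Snz t unfolding S_def by auto
    have sc: "S^2 + C^2 = 1" unfolding S_def C_def by simp
    have cd: "cos (th*(1-t)) = 1 - 2 * S^2" unfolding S_def using cos_double_half[of "th*(1-t)"] by simp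
    have sq: "((th - th * cos (th*(1-t)))/(2*\<sigma>^2))^2 + (-(th * S * C)/\<sigma>^2)^2 = (th * S / \<sigma>^2)^2"
      unfolding cd using sc sg by (simp add: field_simps) algebra
    have "norm ((th - th * cos (th*(1-t)))/(2*\<sigma>^2), -(th * S * C)/\<sigma>^2) = \<bar>th * S / \<sigma>^2\<bar>"
      unfolding norm_Pair real_norm_def power2_abs sq by simp
    moreover have "sqrt (S^2/\<sigma>^2) = \<bar>S\<bar> / \<bar>\<sigma>\<bar>" by (simp add: real_sqrt_divide)
    moreover have "\<bar>th * S / \<sigma>^2\<bar> / (\<bar>S\<bar> / \<bar>\<sigma>\<bar>) = \<bar>th / \<sigma>\<bar>"
      using S sg by (simp add: abs_mult field_simps power2_eq_square)
    moreover have "\<bar>th / \<sigma>\<bar> = th / \<sigma>" by (rule abs_of_pos[OF hp])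
    ultimately show "norm ((th - th * cos (th*(1-t)))/(2*\<sigma>^2), -(th * sin (th*(1-t)/2) * cos (th*(1-t)/2))/\<sigma>^2)
       / sqrt ((sin (th*(1-t)/2))^2/\<sigma>^2) = th/\<sigma>" unfolding S_def C_def by simp
  qed simp
  have int: "((\<lambda>t. norm ((th - th * cos (th*(1-t))) * k, -(th * sin (th*(1-t)/2) * cos (th*(1-t)/2)) * m)
       / sqrt ((sin (th*(1-t)/2))^2 * m)) has_integral th/\<sigma>) {0..1}"
    using int0 unfolding k_def m_def by simp
  show ?thesis
    apply (rule curve_HS[where X = "\<lambda>t. (th*t + sin (th*(1-t)) - sin th) * k" and V = "\<lambda>t. (sin (th*(1-t)/2))^2 * m"
        and X' = "\<lambda>t. (th - th * cos (th*(1-t))) * k" and V' = "\<lambda>t. -(th * sin (th*(1-t)/2) * cos (th*(1-t)/2)) * m"])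
    subgoal for t by (rule derivative_eq_intros refl | simp add: algebra_simps)+
    subgoal for t by (rule derivative_eq_intros refl | simp add: algebra_simps)+
    subgoal by (intro continuous_intros)
    subgoal by (intro continuous_intros) auto
    subgoal by simp
    subgoal using sg unfolding \<sigma>_def m_def by simp
    subgoal unfolding cdh k_def by simp
    subgoal by simp
    subgoal
    proof
      fix t :: real assume "t \<in> {0<..<1}"
      then have "sin (th*(1-t)/2) \<noteq> 0" using Snz by auto
      then show "0 < (sin (th*(1-t)/2))^2 * m" using sg unfolding m_def by simp
    qed
    subgoal using int unfolding \<sigma>_def .
    done
qed

lemma main_gen:
  assumes rng: "-2*pi < th" "th < 2*pi" and P: "P \<in> GammaH th" and mem: "target th \<in> HS (0,1) P"
  shows "Dhat th = target th \<and> target th = hyp_dist (0,1) P"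
proof -
  have all: "target th \<le> L" if "q \<in> GammaH th" "L \<in> HS (0,1) q" for q L
    using GammaH_L[OF that rng] .
  have hP: "hyp_dist (0,1) P = target th"
    unfolding hyp_dist_HS by (rule cInf_eq_minimum[OF mem]) (use all P in auto)
  have hq: "target th \<le> hyp_dist (0,1) q" if q: "q \<in> GammaH th" for q
  proof -
    obtain x v where qv: "q = (x,v)" "v \<ge> 0" using q unfolding GammaH_def by auto
    show ?thesis unfolding hyp_dist_HS
      by (rule cInf_greatest) (use HS_nonempty[OF qv(2)] qv all q in auto)
  qed
  have "Dhat th = target th"
    unfolding Dhat_def by (rule cInf_eq_minimum) (use hP P hq in \<open>force+\<close>)
  then show ?thesis using hP by simp
qed

lemma fH_P1: assumes "\<bar>th\<bar> < pi" shows "fH ((cos (th/2))^2) th = (th + sin th)/2"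
proof (cases "th = 0")
  case True then show ?thesis by (simp add: fH_def)
next
  case False
  have c: "cos (th/2) > 0" using assms by (intro cos_gt_zero_pi) auto
  have s: "sin (th/2) \<noteq> 0" using sin_half_nz assms False by auto
  have sc: "(sin (th/2))^2 + (cos (th/2))^2 = 1" by simp
  have "fH ((cos (th/2))^2) th = (((cos (th/2))^2 + 1) * (th - 2 * sin (th/2) * cos (th/2)) + 2 * cos (th/2) * (2 * sin (th/2) - th * cos (th/2)))
      / (2 * (sin (th/2))^2)"
    unfolding fH_def using False c by (simp add: sin_double_half[of th])
  also have "\<dots> = (th + 2 * sin (th/2) * cos (th/2)) / 2"
    using s by (simp add: field_simps) (use sin_cos_squared_add[of "th/2"] in algebra)
  finally show ?thesis by (simp add: sin_double_half[of th])
qed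

lemma fH_P2: assumes "pi \<le> \<bar>th\<bar>" shows "fH 0 th = (th - sin th) / (1 - cos th)"
proof -
  have "th \<noteq> 0"
  proof
    assume "th = 0" then show False using assms pi_gt_zero by simp
  qed
  then show ?thesis unfolding fH_def cos_double_half[of th] by simp
qed

theorem theorem2p3:
  fixes \<theta> :: real
  assumes "-2*pi < \<theta>" and "\<theta> < 2*pi"
  shows "(\<bar>\<theta>\<bar> < pi \<longrightarrow>
            Dhat \<theta> = \<bar>\<theta>\<bar> \<and>
            \<bar>\<theta>\<bar> = hyp_dist (0, 1) ((\<theta> + sin \<theta>) / 2, (cos (\<theta>/2))^2)) \<and>
         (pi \<le> \<bar>\<theta>\<bar> \<longrightarrow>
            Dhat \<theta> = \<theta> / sin (\<theta>/2) \<and>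
            \<theta> / sin (\<theta>/2) = hyp_dist (0, 1) ((\<theta> - sin \<theta>) / (1 - cos \<theta>), 0))"
proof (intro conjI impI)
  assume sm: "\<bar>\<theta>\<bar> < pi"
  have P: "((\<theta> + sin \<theta>) / 2, (cos (\<theta>/2))^2) \<in> GammaH \<theta>"
    unfolding GammaH_def using dH_eqI[OF _ assms fH_P1[OF sm]] by simp
  have t: "target \<theta> = \<bar>\<theta>\<bar>" using sm unfolding target_def by simp
  have "Dhat \<theta> = target \<theta> \<and> target \<theta> = hyp_dist (0,1) ((\<theta> + sin \<theta>) / 2, (cos (\<theta>/2))^2)"
    by (rule main_gen[OF assms P]) (use curve_small[OF sm] t in simp)
  then show "Dhat \<theta> = \<bar>\<theta>\<bar>" "\<bar>\<theta>\<bar> = hyp_dist (0, 1) ((\<theta> + sin \<theta>) / 2, (cos (\<theta>/2))^2)"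
    using t by auto
next
  assume lg: "pi \<le> \<bar>\<theta>\<bar>"
  have lg2: "\<bar>\<theta>\<bar> < 2*pi" using assms by auto
  have P: "((\<theta> - sin \<theta>) / (1 - cos \<theta>), 0) \<in> GammaH \<theta>"
    unfolding GammaH_def using dH_eqI[OF _ assms fH_P2[OF lg]] by simp
  have t: "target \<theta> = \<theta> / sin (\<theta>/2)" using lg unfolding target_def by simp
  have "Dhat \<theta> = target \<theta> \<and> target \<theta> = hyp_dist (0,1) ((\<theta> - sin \<theta>) / (1 - cos \<theta>), 0)"
    by (rule main_gen[OF assms P]) (use curve_large[OF lg lg2] t in simp)
  then show "Dhat \<theta> = \<theta> / sin (\<theta>/2)" "\<theta> / sin (\<theta>/2) = hyp_dist (0, 1) ((\<theta> - sin \<theta>) / (1 - cos \<theta>), 0)"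
    using t by auto
qed

end
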